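(* Let $b:\mathbb{D}\to\mathbb{D}$ be analytic and let $\Omega$ be an approach region at $1$. If the kernels $k^b_z$ converge in the norm of $\mathcal{H}(b)$ (to the boundary kernel $k^b_1$) as $z\to1$ in $\Omega$, then the limits $b'(1)=\lim_{z\to1,\,z\in\Omega}b'(z)$ and $b(1)=\lim_{z\to1,\,z\in\Omega}b(z)$ exist, and $|b(1)|=1$.
   Context: $\mathcal{H}(b)$ is the reproducing kernel Hilbert space of analytic functions on the unit disk $\mathbb{D}$ with reproducing kernel $k^b_z(w)=\frac{1-\overline{b(z)}b(w)}{1-\overline{z}w}$. An approach region at $1$ is an open simply connected domain $\Omega\subset\mathbb{D}$ with $\partial\Omega\cap\mathbb{T}=\{1\}$ such that for all $z\in\Omega$ sufficiently close to $1$ the segment between $z$ and $1$ lies in $\Omega$. *)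

theory Defs
  imports "HOL-Complex_Analysis.Complex_Analysis"
begin

text \<open>The de Branges--Rovnyak kernel: hb_kernel b w z = k^b_w(z).\<close>
definition hb_kernel :: "(complex \<Rightarrow> complex) \<Rightarrow> complex \<Rightarrow> complex \<Rightarrow> complex" where
  "hb_kernel b w z = (1 - cnj (b w) * b z) / (1 - cnj w * z)"

definition psd_kernel_on :: "complex set \<Rightarrow> (complex \<Rightarrow> complex \<Rightarrow> complex) \<Rightarrow> bool" where
  "psd_kernel_on S M \<longleftrightarrow>
     (\<forall>n::nat. \<forall>z a. (\<forall>i<n. z i \<in> S) \<longrightarrow>
        Re (\<Sum>i<n. \<Sum>j<n. cnj (a i) * a j * M (z i) (z j)) \<ge> 0 \<and>
        Im (\<Sum>i<n. \<Sum>j<n. cnj (a i) * a j * M (z i) (z j)) = 0)"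

text \<open>Reproducing kernel Hilbert space H(K) on the unit disc, via Aronszajn's
  characterisation: f \<in> H(K) with norm \<le> c iff c^2 K(x,y) - f(x) conj(f(y)) is
  positive semidefinite, where K(x,y) = k_y(x) = K' y x.\<close>
definition rkhs_bound :: "(complex \<Rightarrow> complex \<Rightarrow> complex) \<Rightarrow> (complex \<Rightarrow> complex) \<Rightarrow> real \<Rightarrow> bool" where
  "rkhs_bound K f c \<longleftrightarrow> c \<ge> 0 \<and>
     psd_kernel_on (ball 0 1) (\<lambda>x y. complex_of_real (c\<^sup>2) * K y x - f x * cnj (f y))"

definition in_rkhs :: "(complex \<Rightarrow> complex \<Rightarrow> complex) \<Rightarrow> (complex \<Rightarrow> complex) \<Rightarrow> bool" where
  "in_rkhs K f \<longleftrightarrow> (\<exists>c. rkhs_bound K f c)"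

definition rkhs_norm :: "(complex \<Rightarrow> complex \<Rightarrow> complex) \<Rightarrow> (complex \<Rightarrow> complex) \<Rightarrow> real" where
  "rkhs_norm K f = Inf {c. rkhs_bound K f c}"

definition approach_region_at_1 :: "complex set \<Rightarrow> bool" where
  "approach_region_at_1 \<Omega> \<longleftrightarrow> open \<Omega> \<and> \<Omega> \<noteq> {} \<and> simply_connected \<Omega> \<and> \<Omega> \<subseteq> ball 0 1 \<and>
     frontier \<Omega> \<inter> sphere 0 1 = {1} \<and>
     (\<exists>\<delta>>0. \<forall>z\<in>\<Omega>. cmod (z - 1) < \<delta> \<longrightarrow> closed_segment z 1 - {1} \<subseteq> \<Omega>)"

end

theory Submission
  imports Defs
begin


lemma gen_id1:
  fixes a ca s cs t :: complex
  assumes "1 + a * cs \<noteq> 0" "1 + ca * t \<noteq> 0"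
  shows "1 - (cs + ca) / (1 + a * cs) * ((t + a) / (1 + ca * t))
       = (1 - ca * a) * (1 - cs * t) / ((1 + a * cs) * (1 + ca * t))"
proof -
  have "1 - (cs + ca) / (1 + a * cs) * ((t + a) / (1 + ca * t))
     = ((1 + a * cs) * (1 + ca * t) - (cs + ca) * (t + a)) / ((1 + a * cs) * (1 + ca * t))"
    using assms by (simp add: times_divide_times_eq diff_divide_eq_iff)
  also have "(1 + a * cs) * (1 + ca * t) - (cs + ca) * (t + a) = (1 - ca * a) * (1 - cs * t)"
    by (simp add: algebra_simps)
  finally show ?thesis .
qed

lemma moeb_kernel_id:
  fixes a s t :: complex
  assumes "1 + cnj a * s \<noteq> 0" "1 + cnj a * t \<noteq> 0"
  shows "1 - cnj ((s + a) / (1 + cnj a * s)) * ((t + a) / (1 + cnj a * t))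
       = (1 - cnj a * a) * (1 - cnj s * t) / (cnj (1 + cnj a * s) * (1 + cnj a * t))"
proof -
  have h1: "1 + a * cnj s \<noteq> 0" using assms(1) by (metis complex_cnj_cnj complex_cnj_mult complex_cnj_one complex_cnj_add complex_cnj_zero mult.commute)
  have "cnj ((s + a) / (1 + cnj a * s)) = (cnj s + cnj a) / (1 + a * cnj s)" by simp
  moreover have "cnj (1 + cnj a * s) = 1 + a * cnj s" by simp
  ultimately show ?thesis using gen_id1[OF h1 assms(2)] by simp
qed

lemma gen_id2:
  fixes p cp x cx y cy :: complex
  assumes "1 - p * cy \<noteq> 0" "1 - cp * x \<noteq> 0"
  shows "1 - (cy - cp) / (1 - p * cy) * ((x - p) / (1 - cp * x))
       = (1 - cp * p) * (1 - cy * x) / ((1 - p * cy) * (1 - cp * x))"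
proof -
  have "1 - (cy - cp) / (1 - p * cy) * ((x - p) / (1 - cp * x))
     = ((1 - p * cy) * (1 - cp * x) - (cy - cp) * (x - p)) / ((1 - p * cy) * (1 - cp * x))"
    using assms by (simp add: times_divide_times_eq diff_divide_eq_iff)
  also have "(1 - p * cy) * (1 - cp * x) - (cy - cp) * (x - p) = (1 - cp * p) * (1 - cy * x)"
    by (simp add: algebra_simps)
  finally show ?thesis .
qed

lemma psi_kernel_id:
  fixes p x y :: complex
  assumes "1 - cnj p * x \<noteq> 0" "1 - cnj p * y \<noteq> 0"
  shows "1 - cnj ((y - p) / (1 - cnj p * y)) * ((x - p) / (1 - cnj p * x))
       = (1 - cnj p * p) * (1 - cnj y * x) / (cnj (1 - cnj p * y) * (1 - cnj p * x))"
proof -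
  have h1: "1 - p * cnj y \<noteq> 0" using assms(2) by (metis complex_cnj_cnj complex_cnj_mult complex_cnj_one complex_cnj_diff complex_cnj_zero mult.commute)
  have "cnj ((y - p) / (1 - cnj p * y)) = (cnj y - cnj p) / (1 - p * cnj y)" by simp
  moreover have "cnj (1 - cnj p * y) = 1 - p * cnj y" by simp
  ultimately show ?thesis using gen_id2[OF h1 assms(1)] by simp
qed


lemma gen_id3:
  fixes al be cq qx c1 D Ey Ex Fy Fx :: complex
  assumes "D \<noteq> 0" "Ey \<noteq> 0" "Ex \<noteq> 0" "Fy \<noteq> 0" "Fx \<noteq> 0"
  shows "al * (be * D / (Fy * Fx) + cq * qx * c1) / (Ey * Ex) / D
     = al * (be * (1 / (Ey * Fy)) * (1 / (Ex * Fx)) + cq / Ey * (qx / Ex) * (c1 / D))"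
  using assms by (simp add: field_simps)

lemma kernel_decomp:
  fixes b g b1 :: "complex \<Rightarrow> complex" and a p x y :: complex
  assumes hbx: "b x = (g x + a) / (1 + cnj a * g x)" and hby: "b y = (g y + a) / (1 + cnj a * g y)"
    and gx: "g x = (x - p) / (1 - cnj p * x) * b1 x" and gy: "g y = (y - p) / (1 - cnj p * y) * b1 y"
    and ex: "1 + cnj a * g x \<noteq> 0" and ey: "1 + cnj a * g y \<noteq> 0"
    and fx: "1 - cnj p * x \<noteq> 0" and fy: "1 - cnj p * y \<noteq> 0"
    and dxy: "1 - cnj y * x \<noteq> 0"
  shows "hb_kernel b y x = (1 - cnj a * a) *
     ((1 - cnj p * p) * cnj (1 / ((1 + cnj a * g y) * (1 - cnj p * y))) * (1 / ((1 + cnj a * g x) * (1 - cnj p * x)))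
      + cnj ((y - p) / (1 - cnj p * y) / (1 + cnj a * g y)) * ((x - p) / (1 - cnj p * x) / (1 + cnj a * g x)) * hb_kernel b1 y x)"
proof -
  define px where "px = (x - p) / (1 - cnj p * x)"
  define py where "py = (y - p) / (1 - cnj p * y)"
  have e1: "1 - cnj (b y) * b x = (1 - cnj a * a) * (1 - cnj (g y) * g x) / (cnj (1 + cnj a * g y) * (1 + cnj a * g x))"
    unfolding hbx hby using moeb_kernel_id[OF ey ex] by simp
  have e2: "1 - cnj (g y) * g x = (1 - cnj py * px) + cnj py * px * (1 - cnj (b1 y) * b1 x)"
    using gx gy unfolding px_def[symmetric] py_def[symmetric] by (simp add: algebra_simps)
  have e3: "1 - cnj py * px = (1 - cnj p * p) * (1 - cnj y * x) / (cnj (1 - cnj p * y) * (1 - cnj p * x))"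
    unfolding px_def py_def using psi_kernel_id[OF fx fy] .
  have ney: "cnj (1 + cnj a * g y) \<noteq> 0" using ey by (metis complex_cnj_zero_iff)
  have nfy: "cnj (1 - cnj p * y) \<noteq> 0" using fy by (metis complex_cnj_zero_iff)
  show ?thesis
    unfolding hb_kernel_def e1 e2 e3 px_def[symmetric] py_def[symmetric]
    using gen_id3[OF dxy ney ex nfy fx, of "1 - cnj a * a" "1 - cnj p * p" "cnj py" px "1 - cnj (b1 y) * b1 x"]
    by (simp add: mult.assoc)
qed


definition Qf :: "(complex \<Rightarrow> complex) \<Rightarrow> nat \<Rightarrow> (nat \<Rightarrow> complex) \<Rightarrow> (nat \<Rightarrow> complex) \<Rightarrow> complex" where
  "Qf b n z a = (\<Sum>i<n. \<Sum>j<n. cnj (a i) * a j * hb_kernel b (z j) (z i))"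

lemma Qf_Suc_zero: "a n = 0 \<Longrightarrow> Qf b (Suc n) z a = Qf b n z a"
  unfolding Qf_def by (simp add: sum.distrib)

lemma hb_cnj: "cnj (hb_kernel b x w) = hb_kernel b w x"
  unfolding hb_kernel_def by (simp add: mult.commute)

lemma Qf_cnj: "cnj (Qf b n z a) = Qf b n z a"
proof -
  have "cnj (Qf b n z a) = (\<Sum>i<n. \<Sum>j<n. a i * cnj (a j) * hb_kernel b (z i) (z j))"
    unfolding Qf_def by (simp add: hb_cnj)
  also have "\<dots> = Qf b n z a" unfolding Qf_def
    by (subst sum.swap) (simp add: mult.commute mult.left_commute)
  finally show ?thesis .
qed

lemma Qf_Im: "Im (Qf b n z a) = 0"
proof -
  have "Im (cnj (Qf b n z a)) = Im (Qf b n z a)" using Qf_cnj[of b n z a] by simp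
  then show ?thesis by simp
qed

lemma cnj_mult_self: "cnj c * c = complex_of_real ((cmod c)^2)"
  by (metis complex_norm_square mult.commute)


lemma norm_lt1_mult: "cmod u < 1 \<Longrightarrow> cmod v < 1 \<Longrightarrow> 1 - cnj u * v \<noteq> 0"
proof
  assume "cmod u < 1" "cmod v < 1" "1 - cnj u * v = 0"
  then have "cmod (cnj u * v) = 1" by (metis eq_iff_diff_eq_0 norm_one)
  moreover have "cmod (cnj u * v) < 1"
  proof -
    have "cmod u * cmod v \<le> cmod u * 1" using \<open>cmod v < 1\<close> by (intro mult_left_mono) auto
    then show ?thesis using \<open>cmod u < 1\<close> by (simp add: norm_mult)
  qed
  ultimately show False by simp
qed

lemma schur_step:
  fixes b :: "complex \<Rightarrow> complex"
  assumes hol: "b holomorphic_on ball 0 1" and into: "\<forall>x\<in>ball 0 1. cmod (b x) < 1"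
    and p: "p \<in> ball 0 1"
  obtains b1 g where "b1 holomorphic_on ball 0 1" "b1 ` ball 0 1 \<subseteq> cball 0 1"
    "\<forall>x\<in>ball 0 1. b x = (g x + b p) / (1 + cnj (b p) * g x)"
    "\<forall>x\<in>ball 0 1. g x = (x - p) / (1 - cnj p * x) * b1 x"
    "\<forall>x\<in>ball 0 1. 1 + cnj (b p) * g x \<noteq> 0"
proof -
  define a0 where "a0 = b p"
  have a0: "cmod a0 < 1" using into p a0_def by auto
  define g where "g = (\<lambda>x. (b x - a0) / (1 - cnj a0 * b x))"
  have den: "1 - cnj a0 * b x \<noteq> 0" if "x \<in> ball 0 1" for x
    using norm_lt1_mult[OF a0] into that by auto
  have gM: "g x = Moebius_function 0 a0 (b x)" for x
    unfolding g_def Moebius_function_simple ..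
  have gin: "cmod (g x) < 1" if "x \<in> ball 0 1" for x
    unfolding gM using Moebius_function_norm_lt_1[OF a0] into that by auto
  have gp: "g p = 0" unfolding g_def a0_def by simp
  have ghol: "g holomorphic_on ball 0 1"
    unfolding g_def using den by (intro holomorphic_intros hol) auto
  have pn: "cmod p < 1" using p by simp
  have mp: "cmod (-p) < 1" using pn by simp
  define psi where "psi = (\<lambda>x. (x - p) / (1 - cnj p * x))"
  define psii where "psii = Moebius_function 0 (-p)"
  have psiM: "psi x = Moebius_function 0 p x" for x unfolding psi_def Moebius_function_simple ..
  have psii_in: "psii u \<in> ball 0 1" if "cmod u < 1" for u
    unfolding psii_def using Moebius_function_norm_lt_1[OF mp that] by simp
  have psi_in: "cmod (psi x) < 1" if "x \<in> ball 0 1" for x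
    unfolding psiM using Moebius_function_norm_lt_1[OF pn] that by simp
  have inv: "psii (psi x) = x" if "x \<in> ball 0 1" for x
    unfolding psii_def psiM using Moebius_function_compose[of "-p" p x] pn that by simp
  define h where "h = g \<circ> psii"
  have hhol: "h holomorphic_on ball 0 1"
    unfolding h_def
  proof (rule holomorphic_on_compose_gen[OF _ ghol])
    show "psii holomorphic_on ball 0 1" unfolding psii_def by (rule Moebius_function_holomorphic[OF mp])
    show "psii ` ball 0 1 \<subseteq> ball 0 1" using psii_in by auto
  qed
  have h0: "h 0 = 0" unfolding h_def psii_def using gp by (simp add: Moebius_function_of_zero)
  have hle: "cmod (h u) \<le> cmod u" if "cmod u < 1" for u
  proof (rule Schwarz_Lemma(1)[OF hhol h0 _ that])
    fix z :: complex assume "cmod z < 1"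
    then show "cmod (h z) < 1" unfolding h_def using gin psii_in by simp
  qed
  have gle: "cmod (g x) \<le> cmod (psi x)" if "x \<in> ball 0 1" for x
    using hle[OF psi_in[OF that]] inv[OF that] unfolding h_def by simp
  define q where "q = (\<lambda>z. if z = p then deriv g p else (g z - g p) / (z - p))"
  have qhol: "q holomorphic_on ball 0 1"
    unfolding q_def by (rule pole_lemma[OF ghol]) (simp add: pn)
  define b1 where "b1 = (\<lambda>x. q x * (1 - cnj p * x))"
  have b1hol: "b1 holomorphic_on ball 0 1" unfolding b1_def by (intro holomorphic_intros qhol)
  have fne: "1 - cnj p * x \<noteq> 0" if "x \<in> ball 0 1" for x using norm_lt1_mult[OF pn] that by simp
  have gfac: "g x = psi x * b1 x" if "x \<in> ball 0 1" for x
  proof (cases "x = p")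
    case True then show ?thesis using gp unfolding psi_def by simp
  next
    case False
    then have "x - p \<noteq> 0" by simp
    have qx: "q x = g x / (x - p)" using False gp by (simp add: q_def)
    have f: "1 - cnj p * x \<noteq> 0" using fne[OF that] .
    show ?thesis unfolding psi_def b1_def qx using f \<open>x - p \<noteq> 0\<close> by simp
  qed
  have b1le: "cmod (b1 x) \<le> 1" if "x \<in> ball 0 1" "x \<noteq> p" for x
  proof -
    have "psi x \<noteq> 0" unfolding psi_def using that fne[OF that(1)] by simp
    then have "cmod (psi x) > 0" by simp
    moreover have "cmod (psi x) * cmod (b1 x) \<le> cmod (psi x)"
      using gle[OF that(1)] gfac[OF that(1)] by (simp add: norm_mult)
    ultimately show ?thesis by simp
  qed
  have b1p: "cmod (b1 p) \<le> 1"
  proof -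
    have "continuous_on (ball 0 1) b1" using b1hol holomorphic_on_imp_continuous_on by blast
    then have "(b1 \<longlongrightarrow> b1 p) (at p)" using p by (simp add: continuous_on_eq_continuous_at isCont_def)
    moreover have "eventually (\<lambda>x. b1 x \<in> cball 0 1) (at p)"
    proof -
      have "eventually (\<lambda>x. x \<in> ball 0 1) (at p)"
        using p by (intro eventually_at_in_open') auto
      moreover have "eventually (\<lambda>x. x \<noteq> p) (at p)" by (rule eventually_neq_at_within)
      ultimately show ?thesis by eventually_elim (use b1le in auto)
    qed
    ultimately have "b1 p \<in> cball 0 1" by (intro Lim_in_closed_set[of "cball 0 1" b1]) auto
    then show ?thesis by simp
  qed
  have b1in: "b1 ` ball 0 1 \<subseteq> cball 0 1"
    using b1le b1p by (metis image_subsetI mem_ball_0 mem_cball_0)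
  have binv: "b x = (g x + a0) / (1 + cnj a0 * g x)" if "x \<in> ball 0 1" for x
  proof -
    have d1: "1 - cnj a0 * b x \<noteq> 0" by (rule den[OF that])
    have d2: "1 - cnj a0 * a0 \<noteq> 0" using norm_lt1_mult[OF a0 a0] .
    have "g x + a0 = b x * (1 - cnj a0 * a0) / (1 - cnj a0 * b x)"
      unfolding g_def using d1 by (simp add: field_simps)
    moreover have "1 + cnj a0 * g x = (1 - cnj a0 * a0) / (1 - cnj a0 * b x)"
      unfolding g_def using d1 by (simp add: field_simps)
    ultimately show ?thesis using d1 d2 by simp
  qed
  have ene: "1 + cnj a0 * g x \<noteq> 0" if "x \<in> ball 0 1" for x
  proof -
    have d1: "1 - cnj a0 * b x \<noteq> 0" by (rule den[OF that])
    have d2: "1 - cnj a0 * a0 \<noteq> 0" using norm_lt1_mult[OF a0 a0] .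
    have "1 + cnj a0 * g x = (1 - cnj a0 * a0) / (1 - cnj a0 * b x)"
      unfolding g_def using d1 by (simp add: field_simps)
    then show ?thesis using d1 d2 by simp
  qed
  show ?thesis
  proof (rule that[of b1 g])
    show "b1 holomorphic_on ball 0 1" by (rule b1hol)
    show "b1 ` ball 0 1 \<subseteq> cball 0 1" by (rule b1in)
    show "\<forall>x\<in>ball 0 1. b x = (g x + b p) / (1 + cnj (b p) * g x)" using binv unfolding a0_def by blast
    show "\<forall>x\<in>ball 0 1. g x = (x - p) / (1 - cnj p * x) * b1 x" using gfac unfolding psi_def by blast
    show "\<forall>x\<in>ball 0 1. 1 + cnj (b p) * g x \<noteq> 0" using ene unfolding a0_def by blast
  qed
qed


lemma Re_ofreal_mult: "Re (complex_of_real r * z) = r * Re z" by simp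

lemma sum_split_form:
  fixes A B :: complex and x y :: "nat \<Rightarrow> complex" and w :: "nat \<Rightarrow> nat \<Rightarrow> complex"
  shows "(\<Sum>i<m. \<Sum>j<m. A * (x i * y j) + B * w i j) = A * ((\<Sum>i<m. x i) * (\<Sum>j<m. y j)) + B * (\<Sum>i<m. \<Sum>j<m. w i j)"
proof -
  have "(\<Sum>i<m. \<Sum>j<m. A * (x i * y j)) = A * (\<Sum>i<m. \<Sum>j<m. x i * y j)" by (simp add: sum_distrib_left)
  also have "\<dots> = A * ((\<Sum>i<m. x i) * (\<Sum>j<m. y j))" by (simp add: sum_product)
  finally have 1: "(\<Sum>i<m. \<Sum>j<m. A * (x i * y j)) = A * ((\<Sum>i<m. x i) * (\<Sum>j<m. y j))" .
  have 2: "(\<Sum>i<m. \<Sum>j<m. B * w i j) = B * (\<Sum>i<m. \<Sum>j<m. w i j)" by (simp add: sum_distrib_left)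
  show ?thesis using 1 2 by (simp add: sum.distrib)
qed

lemma pick_pos:
  "b holomorphic_on ball 0 1 \<Longrightarrow> b ` ball 0 1 \<subseteq> cball 0 1 \<Longrightarrow> (\<forall>i<n. z i \<in> ball 0 1)
   \<Longrightarrow> 0 \<le> Re (Qf b n z a)"
proof (induction n arbitrary: b a)
  case 0
  then show ?case by (simp add: Qf_def)
next
  case (Suc n)
  define p where "p = z n"
  have p: "p \<in> ball 0 1" using Suc.prems(3) p_def by simp
  show ?case
  proof (cases "\<exists>x\<in>ball 0 1. cmod (b x) = 1")
    case True
    then obtain x0 where x0: "x0 \<in> ball 0 1" "cmod (b x0) = 1" by blast
    have "b constant_on ball 0 1"
    proof (rule maximum_modulus_principle[where U="ball 0 1" and \<xi>=x0])
      show "b holomorphic_on ball 0 1" by (rule Suc.prems(1))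
      show "\<And>z. z \<in> ball 0 1 \<Longrightarrow> cmod (b z) \<le> cmod (b x0)" using Suc.prems(2) x0 by fastforce
    qed (use x0 in auto)
    then obtain c where bc: "\<forall>w\<in>ball 0 1. b w = c" unfolding constant_on_def by blast
    have c1: "cmod c = 1" using bc x0 by auto
    have "cnj c * c = 1" using cnj_mult_self[of c] c1 by simp
    then have k0: "hb_kernel b (z j) (z i) = 0" if "i < Suc n" "j < Suc n" for i j
      unfolding hb_kernel_def using bc Suc.prems(3) that by simp
    have "Qf b (Suc n) z a = 0" unfolding Qf_def by (simp add: k0)
    then show ?thesis by simp
  next
    case False
    then have into: "\<forall>x\<in>ball 0 1. cmod (b x) < 1" using Suc.prems(2) by fastforce
    obtain b1 g where b1hol: "b1 holomorphic_on ball 0 1" and b1in: "b1 ` ball 0 1 \<subseteq> cball 0 1"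
      and binv: "\<forall>x\<in>ball 0 1. b x = (g x + b p) / (1 + cnj (b p) * g x)"
      and gfac: "\<forall>x\<in>ball 0 1. g x = (x - p) / (1 - cnj p * x) * b1 x"
      and ene: "\<forall>x\<in>ball 0 1. 1 + cnj (b p) * g x \<noteq> 0"
      using schur_step[OF Suc.prems(1) into p] by blast
    define a0 where "a0 = b p"
    define U where "U = (\<lambda>x. 1 / ((1 + cnj a0 * g x) * (1 - cnj p * x)))"
    define V where "V = (\<lambda>x. (x - p) / (1 - cnj p * x) / (1 + cnj a0 * g x))"
    define a' where "a' = (\<lambda>j. a j * cnj (V (z j)))"
    define al where "al = 1 - cnj a0 * a0"
    define be where "be = 1 - cnj p * p"
    have pn: "cmod p < 1" using p by simp
    have dec: "hb_kernel b (z j) (z i) = al * (be * cnj (U (z j)) * U (z i) + cnj (V (z j)) * V (z i) * hb_kernel b1 (z j) (z i))"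
      if "i < Suc n" "j < Suc n" for i j
    proof -
      have zi: "z i \<in> ball 0 1" and zj: "z j \<in> ball 0 1" using Suc.prems(3) that by auto
      show ?thesis unfolding al_def be_def U_def V_def a0_def
      proof (rule kernel_decomp)
        show "b (z i) = (g (z i) + b p) / (1 + cnj (b p) * g (z i))" using binv zi by blast
        show "b (z j) = (g (z j) + b p) / (1 + cnj (b p) * g (z j))" using binv zj by blast
        show "g (z i) = (z i - p) / (1 - cnj p * z i) * b1 (z i)" using gfac zi by blast
        show "g (z j) = (z j - p) / (1 - cnj p * z j) * b1 (z j)" using gfac zj by blast
        show "1 + cnj (b p) * g (z i) \<noteq> 0" using ene zi by blast
        show "1 + cnj (b p) * g (z j) \<noteq> 0" using ene zj by blast
        show "1 - cnj p * z i \<noteq> 0" using norm_lt1_mult[OF pn] zi by simp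
        show "1 - cnj p * z j \<noteq> 0" using norm_lt1_mult[OF pn] zj by simp
        show "1 - cnj (z j) * z i \<noteq> 0" using norm_lt1_mult zi zj by simp
      qed
    qed
    define T where "T = (\<Sum>j<Suc n. a j * cnj (U (z j)))"
    have "Qf b (Suc n) z a = (\<Sum>i<Suc n. \<Sum>j<Suc n. (al * be) * ((cnj (a i) * U (z i)) * (a j * cnj (U (z j))))
              + al * (cnj (a' i) * a' j * hb_kernel b1 (z j) (z i)))"
      unfolding Qf_def
    proof (intro sum.cong refl)
      fix i j assume "i \<in> {..<Suc n}" "j \<in> {..<Suc n}"
      then have ij: "i < Suc n" "j < Suc n" by auto
      show "cnj (a i) * a j * hb_kernel b (z j) (z i) = (al * be) * ((cnj (a i) * U (z i)) * (a j * cnj (U (z j))))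
              + al * (cnj (a' i) * a' j * hb_kernel b1 (z j) (z i))"
        unfolding dec[OF ij] a'_def complex_cnj_mult complex_cnj_cnj by (simp only: algebra_simps)
    qed
    also have "\<dots> = al * be * ((\<Sum>i<Suc n. cnj (a i) * U (z i)) * (\<Sum>j<Suc n. a j * cnj (U (z j)))) + al * Qf b1 (Suc n) z a'"
      unfolding Qf_def by (rule sum_split_form)
    also have "(\<Sum>i<Suc n. cnj (a i) * U (z i)) = cnj T" unfolding T_def by simp
    finally have Qeq: "Qf b (Suc n) z a = al * be * (cnj T * T) + al * Qf b1 (Suc n) z a'"
      by (simp add: T_def)
    have "V p = 0" unfolding V_def by simp
    then have "a' n = 0" unfolding a'_def p_def by simp
    then have Q1: "Qf b1 (Suc n) z a' = Qf b1 n z a'" by (rule Qf_Suc_zero)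
    have IH: "0 \<le> Re (Qf b1 n z a')"
      using Suc.IH[OF b1hol b1in] Suc.prems(3) by simp
    have alr: "al = complex_of_real (1 - (cmod a0)^2)" unfolding al_def using cnj_mult_self[of a0] by simp
    have ber: "be = complex_of_real (1 - (cmod p)^2)" unfolding be_def using cnj_mult_self[of p] by simp
    have a0n: "cmod a0 < 1" using into p a0_def by auto
    have ge1: "0 \<le> 1 - (cmod a0)^2" using a0n by (simp add: abs_square_le_1)
    have ge2: "0 \<le> 1 - (cmod p)^2" using pn by (simp add: abs_square_le_1)
    have "Re (Qf b (Suc n) z a) = (1 - (cmod a0)^2) * ((1 - (cmod p)^2) * (cmod T)^2) + (1 - (cmod a0)^2) * Re (Qf b1 n z a')"
      unfolding Qeq Q1 alr ber cnj_mult_self of_real_mult[symmetric] Re_ofreal_mult plus_complex.sel by (simp only: Re_complex_of_real)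
    also have "\<dots> = (1 - (cmod a0)^2) * ((1 - (cmod p)^2) * (cmod T)^2 + Re (Qf b1 n z a'))"
      by (simp only: distrib_left)
    also have "\<dots> \<ge> 0" using ge1 ge2 IH by (intro mult_nonneg_nonneg add_nonneg_nonneg) auto
    finally show ?thesis .
  qed
qed


lemma Qf_pos:
  assumes "b holomorphic_on ball 0 1" "b ` ball 0 1 \<subseteq> ball 0 1" "\<forall>i<n. z i \<in> ball 0 1"
  shows "0 \<le> Re (Qf b n z a)"
proof -
  have "b ` ball 0 1 \<subseteq> cball 0 1" using assms(2) ball_subset_cball by blast
  then show ?thesis using pick_pos[of b n z a] assms by blast
qed

lemma rb_form:
  "(\<Sum>i<n. \<Sum>j<n. cnj (a i) * a j * (complex_of_real (c\<^sup>2) * hb_kernel b (z j) (z i) - f (z i) * cnj (f (z j))))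
   = complex_of_real (c\<^sup>2) * Qf b n z a - (\<Sum>i<n. cnj (a i) * f (z i)) * cnj (\<Sum>i<n. cnj (a i) * f (z i))"
proof -
  have "(\<Sum>i<n. \<Sum>j<n. cnj (a i) * a j * (complex_of_real (c\<^sup>2) * hb_kernel b (z j) (z i) - f (z i) * cnj (f (z j))))
     = (\<Sum>i<n. \<Sum>j<n. complex_of_real (c\<^sup>2) * (cnj (a i) * a j * hb_kernel b (z j) (z i)) - (cnj (a i) * f (z i)) * (a j * cnj (f (z j))))"
    by (intro sum.cong refl) (simp add: algebra_simps)
  also have "\<dots> = (\<Sum>i<n. \<Sum>j<n. complex_of_real (c\<^sup>2) * (cnj (a i) * a j * hb_kernel b (z j) (z i))) - (\<Sum>i<n. \<Sum>j<n. (cnj (a i) * f (z i)) * (a j * cnj (f (z j))))"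
    by (simp add: sum_subtractf)
  also have "(\<Sum>i<n. \<Sum>j<n. complex_of_real (c\<^sup>2) * (cnj (a i) * a j * hb_kernel b (z j) (z i))) = complex_of_real (c\<^sup>2) * Qf b n z a"
    unfolding Qf_def by (simp add: sum_distrib_left)
  also have "(\<Sum>i<n. \<Sum>j<n. (cnj (a i) * f (z i)) * (a j * cnj (f (z j)))) = (\<Sum>i<n. cnj (a i) * f (z i)) * (\<Sum>j<n. a j * cnj (f (z j)))"
    by (rule sum_product[symmetric])
  also have "(\<Sum>j<n. a j * cnj (f (z j))) = cnj (\<Sum>i<n. cnj (a i) * f (z i))" by simp
  finally show ?thesis .
qed

lemma rkhs_bound_iff:
  "rkhs_bound (hb_kernel b) f c \<longleftrightarrow> c \<ge> 0 \<and> (\<forall>n z a. (\<forall>i<n. z i \<in> ball 0 1) \<longrightarrow>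
      (cmod (\<Sum>i<n. cnj (a i) * f (z i)))\<^sup>2 \<le> c\<^sup>2 * Re (Qf b n z a))"
proof -
  have eq: "Re (complex_of_real (c\<^sup>2) * Qf b n z a - F * cnj F) = c\<^sup>2 * Re (Qf b n z a) - (cmod F)\<^sup>2"
    for n z a and F :: complex
    using cnj_mult_self[of F] by (simp add: mult.commute)
  have eqi: "Im (complex_of_real (c\<^sup>2) * Qf b n z a - F * cnj F) = 0" for n z a and F :: complex
    using cnj_mult_self[of F] Qf_Im[of b n z a] by (simp add: mult.commute)
  show ?thesis
    unfolding rkhs_bound_def psd_kernel_on_def rb_form eq eqi by auto
qed

lemma Qf_extend:
  "Qf b (Suc n) (z(n := w)) (a(n := t)) = Qf b n z a + t * (\<Sum>i<n. cnj (a i) * hb_kernel b w (z i))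
     + cnj t * (\<Sum>j<n. a j * hb_kernel b (z j) w) + cnj t * t * hb_kernel b w w"
proof -
  have 1: "(\<Sum>i<n. \<Sum>j<n. cnj ((a(n := t)) i) * (a(n := t)) j * hb_kernel b ((z(n := w)) j) ((z(n := w)) i)) = Qf b n z a"
    unfolding Qf_def by (intro sum.cong refl) auto
  have 2: "(\<Sum>i<n. cnj ((a(n := t)) i) * (a(n := t)) n * hb_kernel b ((z(n := w)) n) ((z(n := w)) i))
       = t * (\<Sum>i<n. cnj (a i) * hb_kernel b w (z i))"
    by (simp add: sum_distrib_left) (intro sum.cong refl, auto simp: algebra_simps)
  have 3: "(\<Sum>j<n. cnj ((a(n := t)) n) * (a(n := t)) j * hb_kernel b ((z(n := w)) j) ((z(n := w)) n))
       = cnj t * (\<Sum>j<n. a j * hb_kernel b (z j) w)"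
    by (simp add: sum_distrib_left) (intro sum.cong refl, auto simp: algebra_simps)
  show ?thesis
    unfolding Qf_def[of b "Suc n"] sum.lessThan_Suc sum.distrib
    using 1 2 3 unfolding Qf_def by (simp add: algebra_simps)
qed

lemma hb_diag_real:
  assumes "w \<in> ball 0 1"
  shows "hb_kernel b w w = complex_of_real ((1 - (cmod (b w))\<^sup>2) / (1 - (cmod w)\<^sup>2))"
  unfolding hb_kernel_def using cnj_mult_self[of "b w"] cnj_mult_self[of w] by simp

lemma kernel_in_rkhs:
  assumes hol: "b holomorphic_on ball 0 1" and into: "b ` ball 0 1 \<subseteq> ball 0 1" and w: "w \<in> ball 0 1"
  shows "rkhs_bound (hb_kernel b) (hb_kernel b w) (sqrt ((1 - (cmod (b w))\<^sup>2) / (1 - (cmod w)\<^sup>2)))"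
proof -
  define \<kappa> where "\<kappa> = (1 - (cmod (b w))\<^sup>2) / (1 - (cmod w)\<^sup>2)"
  have bw: "cmod (b w) < 1" using into w by (metis image_subset_iff mem_ball_0)
  have wn: "cmod w < 1" using w by simp
  have kpos: "\<kappa> > 0" unfolding \<kappa>_def using bw wn
    by (intro divide_pos_pos) (simp_all add: abs_square_less_1)
  have sq: "(sqrt \<kappa>)\<^sup>2 = \<kappa>" using kpos by simp
  show ?thesis unfolding rkhs_bound_iff \<kappa>_def[symmetric] sq
  proof (intro conjI allI impI)
    show "0 \<le> sqrt \<kappa>" using kpos by simp
    fix n :: nat and z a :: "nat \<Rightarrow> complex" assume zin: "\<forall>i<n. z i \<in> ball 0 1"
    define F where "F = (\<Sum>i<n. cnj (a i) * hb_kernel b w (z i))"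
    define t where "t = - cnj F / complex_of_real \<kappa>"
    have zin': "\<forall>i<Suc n. (z(n := w)) i \<in> ball 0 1" using zin w by auto
    have pos: "0 \<le> Re (Qf b (Suc n) (z(n := w)) (a(n := t)))" by (rule Qf_pos[OF hol into zin'])
    have s2: "(\<Sum>j<n. a j * hb_kernel b (z j) w) = cnj F"
      unfolding F_def by (simp add: hb_cnj)
    have nF: "complex_of_real (cmod F) * complex_of_real (cmod F) = F * cnj F"
      using complex_norm_square[of F] by (simp add: power2_eq_square)
    have kk: "hb_kernel b w w = complex_of_real \<kappa>" unfolding \<kappa>_def by (rule hb_diag_real[OF w])
    have "Qf b (Suc n) (z(n := w)) (a(n := t)) = Qf b n z a - complex_of_real ((cmod F)\<^sup>2 / \<kappa>)"
      unfolding Qf_extend F_def[symmetric] s2 kk t_def using kpos nF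
      by (simp add: field_simps cnj_mult_self[symmetric] mult.commute power2_eq_square)
    then have "0 \<le> Re (Qf b n z a) - (cmod F)\<^sup>2 / \<kappa>" using pos by simp
    then have "(cmod F)\<^sup>2 / \<kappa> \<le> Re (Qf b n z a)" by simp
    then show "(cmod F)\<^sup>2 \<le> \<kappa> * Re (Qf b n z a)" using kpos by (simp add: divide_le_eq mult.commute)
  qed
qed

lemma rkhs_bound_diff:
  assumes hol: "b holomorphic_on ball 0 1" and into: "b ` ball 0 1 \<subseteq> ball 0 1"
    and f: "rkhs_bound (hb_kernel b) f c1" and h: "rkhs_bound (hb_kernel b) h c2"
  shows "rkhs_bound (hb_kernel b) (\<lambda>x. f x - h x) (c1 + c2)"
  unfolding rkhs_bound_iff
proof (intro conjI allI impI)
  show "0 \<le> c1 + c2" using f h unfolding rkhs_bound_iff by auto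
  fix n :: nat and z a :: "nat \<Rightarrow> complex" assume zin: "\<forall>i<n. z i \<in> ball 0 1"
  define F where "F = (\<Sum>i<n. cnj (a i) * f (z i))"
  define H where "H = (\<Sum>i<n. cnj (a i) * h (z i))"
  define R where "R = Re (Qf b n z a)"
  have R0: "0 \<le> R" unfolding R_def by (rule Qf_pos[OF hol into zin])
  have c1: "0 \<le> c1" and c2: "0 \<le> c2" using f h unfolding rkhs_bound_iff by auto
  have F: "(cmod F)\<^sup>2 \<le> c1\<^sup>2 * R" using f zin unfolding rkhs_bound_iff F_def R_def by blast
  have H: "(cmod H)\<^sup>2 \<le> c2\<^sup>2 * R" using h zin unfolding rkhs_bound_iff H_def R_def by blast
  have FH: "cmod F * cmod H \<le> c1 * c2 * R"
  proof (rule power2_le_imp_le)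
    have "(cmod F * cmod H)\<^sup>2 = (cmod F)\<^sup>2 * (cmod H)\<^sup>2" by (simp add: power_mult_distrib)
    also have "\<dots> \<le> (c1\<^sup>2 * R) * (c2\<^sup>2 * R)" using F H R0 by (intro mult_mono) auto
    also have "\<dots> = (c1 * c2 * R)\<^sup>2" by (simp add: power_mult_distrib power2_eq_square)
    finally show "(cmod F * cmod H)\<^sup>2 \<le> (c1 * c2 * R)\<^sup>2" .
    show "0 \<le> c1 * c2 * R" using c1 c2 R0 by simp
  qed
  have eq: "(\<Sum>i<n. cnj (a i) * (f (z i) - h (z i))) = F - H"
    unfolding F_def H_def by (simp add: algebra_simps sum_subtractf)
  have "cmod (F - H) \<le> cmod F + cmod H" by (rule norm_triangle_ineq4)
  then have "(cmod (F - H))\<^sup>2 \<le> (cmod F + cmod H)\<^sup>2" by (intro power_mono) auto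
  also have "\<dots> = (cmod F)\<^sup>2 + 2 * (cmod F * cmod H) + (cmod H)\<^sup>2" by (simp add: power2_sum)
  also have "\<dots> \<le> c1\<^sup>2 * R + 2 * (c1 * c2 * R) + c2\<^sup>2 * R" using F H FH by linarith
  also have "\<dots> = (c1 + c2)\<^sup>2 * R" by (simp add: power2_sum algebra_simps)
  finally show "(cmod (\<Sum>i<n. cnj (a i) * (f (z i) - h (z i))))\<^sup>2 \<le> (c1 + c2)\<^sup>2 * Re (Qf b n z a)"
    unfolding eq R_def .
qed




definition Dk :: "(complex \<Rightarrow> complex) \<Rightarrow> complex \<Rightarrow> real" where
  "Dk b x = Re (hb_kernel b x x)"

lemma Dk_eq: "x \<in> ball 0 1 \<Longrightarrow> Dk b x = (1 - (cmod (b x))\<^sup>2) / (1 - (cmod x)\<^sup>2)"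
  unfolding Dk_def using hb_diag_real[of x b] by simp

lemma hb_diag: "x \<in> ball 0 1 \<Longrightarrow> hb_kernel b x x = complex_of_real (Dk b x)"
  using hb_diag_real[of x b] Dk_eq[of x b] by simp

lemma Dk_pos:
  assumes "b ` ball 0 1 \<subseteq> ball 0 1" "x \<in> ball 0 1"
  shows "Dk b x > 0"
proof -
  have "cmod (b x) < 1" using assms by (metis image_subset_iff mem_ball_0)
  moreover have "cmod x < 1" using assms by simp
  ultimately show ?thesis unfolding Dk_eq[OF assms(2)]
    by (intro divide_pos_pos) (simp_all add: abs_square_less_1)
qed

lemma pt_bound:
  assumes "rkhs_bound (hb_kernel b) f c" "x \<in> ball 0 1"
  shows "cmod (f x) \<le> c * sqrt (Dk b x)"
proof -
  have c0: "c \<ge> 0" using assms(1) unfolding rkhs_bound_iff by auto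
  have H: "\<forall>n z a. (\<forall>i<n. z i \<in> ball 0 1) \<longrightarrow> (cmod (\<Sum>i<n. cnj (a i) * f (z i)))\<^sup>2 \<le> c\<^sup>2 * Re (Qf b n z a)"
    using assms(1) unfolding rkhs_bound_iff by blast
  have "(cmod (f x))\<^sup>2 \<le> c\<^sup>2 * Re (Qf b 1 (\<lambda>_. x) (\<lambda>_. 1))"
    using spec[OF spec[OF spec[OF H, of 1], of "\<lambda>_. x"], of "\<lambda>_. 1"] assms(2) by simp
  then have le: "(cmod (f x))\<^sup>2 \<le> c\<^sup>2 * Dk b x" unfolding Qf_def Dk_def by simp
  have "cmod (f x) = sqrt ((cmod (f x))\<^sup>2)" by simp
  also have "\<dots> \<le> sqrt (c\<^sup>2 * Dk b x)" using le by (rule real_sqrt_le_mono)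
  also have "\<dots> = c * sqrt (Dk b x)" using c0 by (simp add: real_sqrt_mult)
  finally show ?thesis .
qed

lemma pick2:
  assumes hol: "b holomorphic_on ball 0 1" and into: "b ` ball 0 1 \<subseteq> ball 0 1"
    and y: "y \<in> ball 0 1" and z: "z \<in> ball 0 1"
  shows "(cmod (hb_kernel b z y))\<^sup>2 \<le> Dk b y * Dk b z"
proof -
  define A where "A = Dk b y"
  define B where "B = Dk b z"
  define X where "X = hb_kernel b z y"
  have B0: "B > 0" unfolding B_def by (rule Dk_pos[OF into z])
  define zz where "zz = (\<lambda>i::nat. if i = 0 then y else z)"
  define aa where "aa = (\<lambda>i::nat. if i = 0 then complex_of_real B else - cnj X)"
  have zin: "\<forall>i<2. zz i \<in> ball 0 1" unfolding zz_def using y z by auto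
  have pos: "0 \<le> Re (Qf b 2 zz aa)" by (rule Qf_pos[OF hol into zin])
  have Kyy: "hb_kernel b y y = complex_of_real A" unfolding A_def by (rule hb_diag[OF y])
  have Kzz: "hb_kernel b z z = complex_of_real B" unfolding B_def by (rule hb_diag[OF z])
  have Kyz: "hb_kernel b y z = cnj X" unfolding X_def by (simp add: hb_cnj)
  have nX: "complex_of_real (cmod X) * complex_of_real (cmod X) = X * cnj X"
    using complex_norm_square[of X] by (simp add: power2_eq_square)
  have "Qf b 2 zz aa = complex_of_real (B * (B * A - (cmod X)\<^sup>2))"
    unfolding Qf_def numeral_2_eq_2 zz_def aa_def
    by (simp add: Kyy Kzz Kyz X_def[symmetric] nX power2_eq_square algebra_simps)
  then have "0 \<le> B * (B * A - (cmod X)\<^sup>2)" using pos by simp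
  then have "0 \<le> B * A - (cmod X)\<^sup>2" using B0 by (simp add: zero_le_mult_iff)
  then show ?thesis unfolding A_def B_def X_def by (simp add: mult.commute)
qed


lemma AB_bound:
  fixes A B :: real
  assumes "A \<ge> 0" "B > 0" "(A + B)\<^sup>2 \<le> 36 * (A * B)"
  shows "A \<le> 36 * B"
proof (cases "A \<le> B")
  case True then show ?thesis using assms by linarith
next
  case False
  then have "A * A \<le> (A + B)\<^sup>2" using assms by (simp add: power2_eq_square algebra_simps)
  then have "A * A \<le> (36 * B) * A" using assms by (simp add: algebra_simps)
  moreover have "A > 0" using False assms by simp
  ultimately show ?thesis by simp
qed

lemma harnack:
  assumes hol: "b holomorphic_on ball 0 1" and into: "b ` ball 0 1 \<subseteq> ball 0 1"
    and z: "z \<in> ball 0 1" and yz: "cmod (y - z) \<le> (1 - cmod z) / 2"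
  shows "y \<in> ball 0 1" "Dk b y \<le> 144 * Dk b z"
proof -
  define nz where "nz = cmod z"
  have nz1: "nz < 1" "nz \<ge> 0" using z nz_def by auto
  have ny: "cmod y \<le> nz + (1 - nz) / 2"
    using norm_triangle_ineq2[of y z] yz unfolding nz_def by argo
  then have "cmod y < 1" using nz1 by argo
  then show y: "y \<in> ball 0 1" by simp
  have ny1: "cmod y < 1" using y by simp
  define Py where "Py = 1 - (cmod y)\<^sup>2"
  define Pz where "Pz = 1 - nz\<^sup>2"
  have Pz_eq: "Pz = (1 - nz) * (1 + nz)" unfolding Pz_def by (simp add: power2_eq_square algebra_simps)
  have Py_ge: "Py \<ge> 1 - cmod y"
  proof -
    have "cmod y * cmod y \<le> cmod y" using ny1 by (intro mult_left_le_one_le) auto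
    then show ?thesis unfolding Py_def power2_eq_square by argo
  qed
  have Pz_le: "Pz \<le> 2 * (1 - nz)" unfolding Pz_eq using nz1 by (intro order_trans[OF mult_left_mono[of "1 + nz" 2]]) auto
  have Pz_ge: "Pz \<ge> 1 - nz" unfolding Pz_eq using nz1 mult_left_le_one_le[of nz nz] by (simp add: algebra_simps)
  have Pz0: "Pz > 0" using Pz_ge nz1 by simp
  have PyPz: "Py \<ge> Pz / 4" using Py_ge Pz_le ny by argo
  have Py0: "Py > 0" using PyPz Pz0 by simp
  have ncz: "cmod (1 - cnj z * y) \<le> 3 / 2 * Pz"
  proof -
    have e: "1 - cnj z * y = (1 - cnj z * z) + cnj z * (z - y)" by (simp add: algebra_simps)
    have "cmod (1 - cnj z * y) \<le> cmod (1 - cnj z * z) + cmod (cnj z * (z - y))"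
      unfolding e by (rule norm_triangle_ineq)
    also have "cmod (1 - cnj z * z) = Pz"
    proof -
      have "1 - cnj z * z = complex_of_real Pz" unfolding Pz_def nz_def cnj_mult_self by simp
      then show ?thesis using Pz0 by simp
    qed
    also have "cmod (cnj z * (z - y)) = nz * cmod (y - z)" by (simp add: norm_mult nz_def norm_minus_commute)
    also have "\<dots> \<le> nz * ((1 - nz) / 2)" using yz nz1 by (intro mult_left_mono) (auto simp: nz_def)
    also have "nz * ((1 - nz) / 2) \<le> Pz / 2" 
    proof -
      have "nz * ((1 - nz) / 2) \<le> (1 - nz) / 2" using nz1 by (intro mult_left_le_one_le) auto
      then show ?thesis using Pz_ge by argo
    qed
    finally show ?thesis by simp
  qed
  define A where "A = 1 - (cmod (b y))\<^sup>2"
  define B where "B = 1 - (cmod (b z))\<^sup>2"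
  have by1: "cmod (b y) < 1" using into y by (metis image_subset_iff mem_ball_0)
  have bz1: "cmod (b z) < 1" using into z by (metis image_subset_iff mem_ball_0)
  have A0: "A \<ge> 0" unfolding A_def using by1 by (simp add: abs_square_le_1)
  have B0: "B > 0" unfolding B_def using bz1 by (simp add: abs_square_less_1)
  have Dy: "Dk b y = A / Py" unfolding A_def Py_def using Dk_eq[OF y] by simp
  have Dz: "Dk b z = B / Pz" unfolding B_def Pz_def nz_def using Dk_eq[OF z] by simp
  have p2: "(cmod (hb_kernel b z y))\<^sup>2 \<le> Dk b y * Dk b z" by (rule pick2[OF hol into y z])
  have den0: "1 - cnj z * y \<noteq> 0" using norm_lt1_mult ny1 z by simp
  have "hb_kernel b z y = (1 - cnj (b z) * b y) / (1 - cnj z * y)" unfolding hb_kernel_def ..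
  then have "(cmod (1 - cnj (b z) * b y))\<^sup>2 = (cmod (hb_kernel b z y))\<^sup>2 * (cmod (1 - cnj z * y))\<^sup>2"
    using den0 by (simp add: norm_divide power_divide)
  also have "\<dots> \<le> (A / Py) * (B / Pz) * (3 / 2 * Pz)\<^sup>2"
    using p2 Dy Dz ncz A0 B0 Py0 Pz0 by (intro mult_mono power_mono) auto
  also have "\<dots> = A * B * (9 / 4) * (Pz / Py)" using Pz0 Py0 by (simp add: power2_eq_square field_simps)
  also have "\<dots> \<le> A * B * (9 / 4) * 4"
  proof -
    have "Pz / Py \<le> 4" using PyPz Py0 by (simp add: divide_le_eq)
    then show ?thesis using A0 B0 by (intro mult_left_mono) auto
  qed
  finally have up: "(cmod (1 - cnj (b z) * b y))\<^sup>2 \<le> 9 * (A * B)" by simp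
  have low: "(A + B) / 2 \<le> cmod (1 - cnj (b z) * b y)"
  proof -
    have "1 - cmod (b z) * cmod (b y) \<le> cmod (1 - cnj (b z) * b y)"
      using norm_triangle_ineq2[of 1 "cnj (b z) * b y"] by (simp add: norm_mult)
    moreover have "(A + B) / 2 \<le> 1 - cmod (b z) * cmod (b y)"
    proof -
      have "0 \<le> (cmod (b z) - cmod (b y))\<^sup>2" by simp
      then have h: "2 * (cmod (b z) * cmod (b y)) \<le> (cmod (b z))\<^sup>2 + (cmod (b y))\<^sup>2"
        unfolding power2_diff by linarith
      show ?thesis unfolding A_def B_def using h by argo
    qed
    ultimately show ?thesis by linarith
  qed
  have "((A + B) / 2)\<^sup>2 \<le> 9 * (A * B)"
  proof -
    have "0 \<le> (A + B) / 2" using A0 B0 by simp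
    then have "((A + B) / 2)\<^sup>2 \<le> (cmod (1 - cnj (b z) * b y))\<^sup>2" by (rule power_mono[OF low])
    then show ?thesis using up by argo
  qed
  then have "(A + B)\<^sup>2 \<le> 36 * (A * B)" by (simp add: power_divide)
  then have AB: "A \<le> 36 * B" by (rule AB_bound[OF A0 B0])
  have "Dk b y = A / Py" by (rule Dy)
  also have "\<dots> \<le> (36 * B) / (Pz / 4)"
  proof (rule frac_le)
    show "0 \<le> 36 * B" using B0 by simp
    show "A \<le> 36 * B" by (rule AB)
    show "0 < Pz / 4" using Pz0 by simp
    show "Pz / 4 \<le> Py" by (rule PyPz)
  qed
  also have "(36 * B) / (Pz / 4) = 144 * (B / Pz)" by simp
  also have "\<dots> = 144 * Dk b z" unfolding Dz ..
  finally show "Dk b y \<le> 144 * Dk b z" .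
qed


lemma small_bound:
  assumes hol: "b holomorphic_on ball 0 1" and into: "b ` ball 0 1 \<subseteq> ball 0 1"
    and g: "rkhs_bound (hb_kernel b) g cg" and z: "z \<in> ball 0 1"
    and lt: "rkhs_norm (hb_kernel b) (\<lambda>w. hb_kernel b z w - g w) < e"
  shows "\<exists>c. rkhs_bound (hb_kernel b) (\<lambda>w. hb_kernel b z w - g w) c \<and> c < e"
proof -
  define S where "S = {c. rkhs_bound (hb_kernel b) (\<lambda>w. hb_kernel b z w - g w) c}"
  have "rkhs_bound (hb_kernel b) (\<lambda>w. hb_kernel b z w - g w) (sqrt ((1 - (cmod (b z))\<^sup>2) / (1 - (cmod z)\<^sup>2)) + cg)"
    by (rule rkhs_bound_diff[OF hol into kernel_in_rkhs[OF hol into z] g])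
  then have "S \<noteq> {}" unfolding S_def by blast
  moreover have "Inf S < e" using lt unfolding rkhs_norm_def S_def .
  ultimately obtain c where "c \<in> S" "c < e" using cInf_lessD by blast
  then show ?thesis unfolding S_def by blast
qed

lemma near_bound:
  assumes z: "z \<in> ball 0 1" and yz: "cmod (y - z) \<le> (1 - cmod z) / 2"
  shows "cmod (1 - cnj z * y) \<le> 3 / 2 * (1 - (cmod z)\<^sup>2)"
proof -
  define nz where "nz = cmod z"
  have nz1: "nz < 1" "nz \<ge> 0" using z nz_def by auto
  define Pz where "Pz = 1 - nz\<^sup>2"
  have Pz_eq: "Pz = (1 - nz) * (1 + nz)" unfolding Pz_def by (simp add: power2_eq_square algebra_simps)
  have Pz_ge: "Pz \<ge> 1 - nz" unfolding Pz_eq using nz1 mult_left_le_one_le[of nz nz] by (simp add: algebra_simps)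
  have Pz0: "Pz > 0" using Pz_ge nz1 by simp
  have e: "1 - cnj z * y = (1 - cnj z * z) + cnj z * (z - y)" by (simp add: algebra_simps)
  have "cmod (1 - cnj z * y) \<le> cmod (1 - cnj z * z) + cmod (cnj z * (z - y))"
    unfolding e by (rule norm_triangle_ineq)
  also have "cmod (1 - cnj z * z) = Pz"
  proof -
    have "1 - cnj z * z = complex_of_real Pz" unfolding Pz_def nz_def cnj_mult_self by simp
    then show ?thesis using Pz0 by simp
  qed
  also have "cmod (cnj z * (z - y)) = nz * cmod (y - z)" by (simp add: norm_mult nz_def norm_minus_commute)
  also have "\<dots> \<le> nz * ((1 - nz) / 2)" using yz nz1 by (intro mult_left_mono) (auto simp: nz_def)
  also have "nz * ((1 - nz) / 2) \<le> Pz / 2"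
  proof -
    have "nz * ((1 - nz) / 2) \<le> (1 - nz) / 2" using nz1 by (intro mult_left_le_one_le) auto
    then show ?thesis using Pz_ge by argo
  qed
  finally have "cmod (1 - cnj z * y) \<le> Pz + Pz / 2" by simp
  then show ?thesis unfolding Pz_def nz_def by argo
qed

lemma deriv_est:
  assumes hol: "b holomorphic_on ball 0 1" and into: "b ` ball 0 1 \<subseteq> ball 0 1"
    and z: "z \<in> ball 0 1" and u: "rkhs_bound (hb_kernel b) (\<lambda>w. hb_kernel b z w - g w) c"
    and gf: "\<forall>x\<in>ball 0 1. g x = (1 - cnj b1 * b x) / (1 - x)"
  shows "cmod (deriv (\<lambda>y. (1 - cnj (b z) * b y) - (1 - cnj z * y) * ((1 - cnj b1 * b y) / (1 - y))) z)
         \<le> 72 * c * sqrt (Dk b z)"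
proof -
  define v where "v = (\<lambda>y. (1 - cnj (b z) * b y) - (1 - cnj z * y) * ((1 - cnj b1 * b y) / (1 - y)))"
  define r where "r = (1 - cmod z) / 2"
  have nz: "cmod z < 1" using z by simp
  have r0: "r > 0" unfolding r_def using nz by simp
  have c0: "c \<ge> 0" using u unfolding rkhs_bound_iff by auto
  have cb: "cball z r \<subseteq> ball 0 1"
  proof
    fix y assume "y \<in> cball z r"
    then have "cmod (y - z) \<le> (1 - cmod z) / 2" unfolding r_def by (simp add: dist_norm norm_minus_commute)
    then show "y \<in> ball 0 1" using harnack(1)[OF hol into z] by blast
  qed
  have vhol: "v holomorphic_on ball 0 1"
  proof -
    have "1 - y \<noteq> 0" if "y \<in> ball 0 1" for y :: complex
    proof
      assume "1 - y = 0"
      then have "y = 1" by simp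
      then show False using that by simp
    qed
    then show ?thesis unfolding v_def by (intro holomorphic_intros hol) auto
  qed
  have vbound: "cmod (v y) \<le> 18 * c * (1 - (cmod z)\<^sup>2) * sqrt (Dk b z)" if "cmod (z - y) = r" for y
  proof -
    have yz: "cmod (y - z) \<le> (1 - cmod z) / 2" using that unfolding r_def by (simp add: norm_minus_commute)
    have y: "y \<in> ball 0 1" using harnack(1)[OF hol into z yz] .
    have den: "1 - cnj z * y \<noteq> 0" using norm_lt1_mult nz y by simp
    have gy: "g y = (1 - cnj b1 * b y) / (1 - y)" using gf y by blast
    have kk: "(1 - cnj z * y) * hb_kernel b z y = 1 - cnj (b z) * b y" unfolding hb_kernel_def using den by simp
    have "v y = (1 - cnj z * y) * (hb_kernel b z y - g y)"
      unfolding v_def right_diff_distrib kk gy ..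
    then have e1: "cmod (v y) = cmod (1 - cnj z * y) * cmod (hb_kernel b z y - g y)" by (simp add: norm_mult)
    have e2: "cmod (1 - cnj z * y) * cmod (hb_kernel b z y - g y) \<le> (3 / 2 * (1 - (cmod z)\<^sup>2)) * (c * sqrt (Dk b y))"
      using near_bound[OF z yz] pt_bound[OF u y] nz by (intro mult_mono) (auto simp: abs_square_le_1)
    have e3: "c * sqrt (Dk b y) \<le> c * (12 * sqrt (Dk b z))"
    proof -
      have "sqrt (Dk b y) \<le> sqrt (144 * Dk b z)" using harnack(2)[OF hol into z yz] by (rule real_sqrt_le_mono)
      also have "sqrt (144 * Dk b z) = 12 * sqrt (Dk b z)" by (simp add: real_sqrt_mult)
      finally show ?thesis using c0 by (rule mult_left_mono)
    qed
    have e4: "(3 / 2 * (1 - (cmod z)\<^sup>2)) * (c * sqrt (Dk b y)) \<le> (3 / 2 * (1 - (cmod z)\<^sup>2)) * (c * (12 * sqrt (Dk b z)))"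
      using e3
    proof (rule mult_left_mono)
      show "0 \<le> 3 / 2 * (1 - (cmod z)\<^sup>2)" using nz by (simp add: abs_square_le_1)
    qed
    have e5: "(3 / 2 * (1 - (cmod z)\<^sup>2)) * (c * (12 * sqrt (Dk b z))) = 18 * c * (1 - (cmod z)\<^sup>2) * sqrt (Dk b z)"
      by (simp add: algebra_simps)
    show ?thesis using e1 e2 e4 e5 by linarith
  qed
  have "cmod ((deriv ^^ 1) v z) \<le> fact 1 * (18 * c * (1 - (cmod z)\<^sup>2) * sqrt (Dk b z)) / r ^ 1"
  proof (rule Cauchy_inequality)
    show "v holomorphic_on ball z r" using vhol cb ball_subset_cball by (meson holomorphic_on_subset order_trans)
    show "continuous_on (cball z r) v" using vhol cb holomorphic_on_imp_continuous_on holomorphic_on_subset by blast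
    show "0 < r" by (rule r0)
  qed (rule vbound)
  then have "cmod (deriv v z) \<le> (18 * c * (1 - (cmod z)\<^sup>2) * sqrt (Dk b z)) / r" by simp
  also have "\<dots> = 36 * c * (1 + cmod z) * sqrt (Dk b z)"
    unfolding r_def using nz by (simp add: power2_eq_square field_simps)
  also have "\<dots> \<le> 72 * c * sqrt (Dk b z)"
  proof -
    have "c * (1 + cmod z) \<le> c * 2" using nz c0 by (intro mult_left_mono) auto
    then have "36 * c * (1 + cmod z) \<le> 72 * c" by simp
    then show ?thesis using Dk_pos[OF into z] by (intro mult_right_mono) auto
  qed
  finally show ?thesis unfolding v_def .
qed


lemma gen_id4:
  fixes cbz d cb1 N cz P w :: complex
  assumes "w \<noteq> 0"
  shows "- (cbz * d) - ((- cz) * (N / w) + P * ((- (cb1 * d) * w + N) / (w * w)))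
       = d * (P / w * cb1 - cbz) + N / w * (cz - P / w)"
  using assms by (simp add: field_simps power2_eq_square)

lemma deriv_formula:
  assumes hol: "b holomorphic_on ball 0 1" and z: "z \<in> ball 0 1"
  shows "deriv (\<lambda>y. (1 - cnj (b z) * b y) - (1 - cnj z * y) * ((1 - cnj b1 * b y) / (1 - y))) z
   = deriv b z * ((1 - cnj z * z) / (1 - z) * cnj b1 - cnj (b z)) + (1 - cnj b1 * b z) / (1 - z) * (cnj z - (1 - cnj z * z) / (1 - z))"
proof -
  have bd: "(b has_field_derivative deriv b z) (at z)" by (rule holomorphic_derivI[OF hol open_ball z])
  have z1: "1 - z \<noteq> 0" using z by auto
  have "((\<lambda>y. (1 - cnj (b z) * b y) - (1 - cnj z * y) * ((1 - cnj b1 * b y) / (1 - y))) has_field_derivative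
      (- (cnj (b z) * deriv b z) - ((- cnj z) * ((1 - cnj b1 * b z) / (1 - z)) + (1 - cnj z * z) * ((- (cnj b1 * deriv b z) * (1 - z) + (1 - cnj b1 * b z)) / ((1 - z) * (1 - z)))))) (at z)"
    apply (rule derivative_eq_intros bd refl | simp only: )+
       apply (rule z1)
      apply (rule refl)
     apply (rule refl)
    apply (simp add: algebra_simps)
    done
  then have "deriv (\<lambda>y. (1 - cnj (b z) * b y) - (1 - cnj z * y) * ((1 - cnj b1 * b y) / (1 - y))) z
     = - (cnj (b z) * deriv b z) - ((- cnj z) * ((1 - cnj b1 * b z) / (1 - z)) + (1 - cnj z * z) * ((- (cnj b1 * deriv b z) * (1 - z) + (1 - cnj b1 * b z)) / ((1 - z) * (1 - z))))"
    by (rule DERIV_imp_deriv)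
  also have "\<dots> = deriv b z * ((1 - cnj z * z) / (1 - z) * cnj b1 - cnj (b z)) + (1 - cnj b1 * b z) / (1 - z) * (cnj z - (1 - cnj z * z) / (1 - z))"
    by (rule gen_id4[OF z1])
  finally show ?thesis .
qed


theorem theoremD:
  fixes b :: "complex \<Rightarrow> complex" and \<Omega> :: "complex set"
  assumes "b holomorphic_on ball 0 1"
    and "b ` ball 0 1 \<subseteq> ball 0 1"
    and "approach_region_at_1 \<Omega>"
    and "\<exists>g. in_rkhs (hb_kernel b) g \<and>
           ((\<lambda>z. rkhs_norm (hb_kernel b) (\<lambda>w. hb_kernel b z w - g w)) \<longlongrightarrow> 0) (at 1 within \<Omega>)"
  shows "\<exists>b1 db1. (b \<longlongrightarrow> b1) (at 1 within \<Omega>) \<and> (deriv b \<longlongrightarrow> db1) (at 1 within \<Omega>) \<and> cmod b1 = 1"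
proof -
  note hol = assms(1) and into = assms(2)
  have Osub: "\<Omega> \<subseteq> ball 0 1" and fr: "frontier \<Omega> \<inter> sphere 0 1 = {1}"
    using assms(3) unfolding approach_region_at_1_def by auto
  obtain g where gin: "in_rkhs (hb_kernel b) g"
    and lim: "((\<lambda>z. rkhs_norm (hb_kernel b) (\<lambda>w. hb_kernel b z w - g w)) \<longlongrightarrow> 0) (at 1 within \<Omega>)"
    using assms(4) by blast
  obtain cg where cg: "rkhs_bound (hb_kernel b) g cg" using gin unfolding in_rkhs_def by blast
  have cg0: "cg \<ge> 0" using cg unfolding rkhs_bound_iff by auto
  define F where "F = at (1::complex) within \<Omega>"
  define u where "u = (\<lambda>z w. hb_kernel b z w - g w)"
  have evO: "eventually (\<lambda>z. z \<in> \<Omega>) F" unfolding F_def by (simp add: eventually_at_filter)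
  have small: "eventually (\<lambda>z. z \<in> \<Omega> \<and> (\<exists>c. rkhs_bound (hb_kernel b) (u z) c \<and> c < e)) F" if e: "e > 0" for e
  proof -
    have "eventually (\<lambda>z. rkhs_norm (hb_kernel b) (u z) < e) F"
      using order_tendstoD(2)[OF lim e] unfolding F_def u_def .
    then show ?thesis using evO
    proof eventually_elim
      case (elim z)
      then have z: "z \<in> ball 0 1" using Osub by auto
      show ?case using small_bound[OF hol into cg z, of e] elim unfolding u_def by auto
    qed
  qed
  have ptw: "((\<lambda>z. hb_kernel b z x) \<longlongrightarrow> g x) F" if x: "x \<in> ball 0 1" for x
  proof (rule tendstoI)
    fix e :: real assume e: "e > 0"
    define s where "s = sqrt (Dk b x)"
    have s0: "s \<ge> 0" unfolding s_def using Dk_pos[OF into x] by simp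
    define e' where "e' = e / (s + 1)"
    have e'0: "e' > 0" unfolding e'_def using e s0 by simp
    have e's: "e' * s < e"
    proof -
      have "e' * s = e * (s / (s + 1))" unfolding e'_def by simp
      also have "\<dots> < e * 1" using e s0 by (intro mult_strict_left_mono) auto
      finally show ?thesis by simp
    qed
    show "eventually (\<lambda>z. dist (hb_kernel b z x) (g x) < e) F"
      using small[OF e'0]
    proof eventually_elim
      case (elim z)
      then obtain c where c: "rkhs_bound (hb_kernel b) (u z) c" "c < e'" by blast
      have "cmod (u z x) \<le> c * s" unfolding s_def by (rule pt_bound[OF c(1) x])
      also have "\<dots> \<le> e' * s" using c(2) s0 by (intro mult_right_mono) auto
      also have "\<dots> < e" by (rule e's)
      finally show ?case by (simp add: dist_norm u_def)
    qed
  qed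
  define M where "M = (1 + cg)\<^sup>2"
  have Dbd: "eventually (\<lambda>z. z \<in> \<Omega> \<and> Dk b z \<le> M) F"
    using small[OF zero_less_one]
  proof eventually_elim
    case (elim z)
    then have z: "z \<in> ball 0 1" using Osub by auto
    from elim obtain c where c: "rkhs_bound (hb_kernel b) (u z) c" "c < 1" by blast
    define s where "s = sqrt (Dk b z)"
    have D0: "Dk b z > 0" by (rule Dk_pos[OF into z])
    have s0: "s > 0" unfolding s_def using D0 by simp
    have h1: "cmod (hb_kernel b z z - g z) \<le> c * s" using pt_bound[OF c(1) z] unfolding u_def s_def .
    have h2: "cmod (g z) \<le> cg * s" using pt_bound[OF cg z] unfolding s_def .
    have "s * s = Dk b z" unfolding s_def using D0 by simp
    also have "Dk b z = cmod (hb_kernel b z z)" using hb_diag[OF z, of b] D0 by simp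
    also have "\<dots> \<le> cmod (g z) + cmod (hb_kernel b z z - g z)" by (rule norm_triangle_sub)
    also have "\<dots> \<le> cg * s + c * s" using h1 h2 by simp
    also have "\<dots> \<le> (1 + cg) * s" using c(2) s0 by (simp add: algebra_simps)
    finally have "s * s \<le> (1 + cg) * s" .
    then have "s \<le> 1 + cg" using s0 by simp
    then have "s\<^sup>2 \<le> (1 + cg)\<^sup>2" using s0 by (intro power_mono) auto
    then have "Dk b z \<le> M" unfolding M_def s_def using D0 by simp
    then show ?case using elim by simp
  qed
  have Fnb: "F \<noteq> bot"
  proof -
    have "1 \<in> frontier \<Omega>" using fr by blast
    then have "1 \<in> closure \<Omega>" using frontier_closures by blast
    moreover have "1 \<notin> \<Omega>" using Osub by auto
    ultimately have "(1::complex) islimpt \<Omega>" unfolding closure_def by blast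
    then show ?thesis unfolding F_def using trivial_limit_within[of 1 \<Omega>] by (simp add: trivial_limit_def)
  qed
  have zlim: "((\<lambda>z. z) \<longlongrightarrow> 1) F" unfolding F_def by (rule tendsto_ident_at)
  have bsq: "((\<lambda>z. (cmod (b z))\<^sup>2) \<longlongrightarrow> 1) F"
  proof -
    have "((\<lambda>z. 1 - (cmod (b z))\<^sup>2) \<longlongrightarrow> 0) F"
    proof (rule Lim_null_comparison)
      show "eventually (\<lambda>z. norm (1 - (cmod (b z))\<^sup>2) \<le> M * (1 - (cmod z)\<^sup>2)) F"
        using Dbd
      proof eventually_elim
        case (elim z)
        then have z: "z \<in> ball 0 1" using Osub by auto
        have nz: "cmod z < 1" using z by simp
        have P0: "1 - (cmod z)\<^sup>2 > 0" using nz by (simp add: abs_square_less_1)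
        have e1: "1 - (cmod (b z))\<^sup>2 = Dk b z * (1 - (cmod z)\<^sup>2)" using Dk_eq[OF z, of b] P0 by simp
        have D0: "Dk b z > 0" by (rule Dk_pos[OF into z])
        have "norm (1 - (cmod (b z))\<^sup>2) = Dk b z * (1 - (cmod z)\<^sup>2)" unfolding e1 using D0 P0 by simp
        also have "\<dots> \<le> M * (1 - (cmod z)\<^sup>2)" using elim P0 by (intro mult_right_mono) auto
        finally show ?case .
      qed
      have "((\<lambda>z. M * (1 - (cmod z)\<^sup>2)) \<longlongrightarrow> M * (1 - (cmod (1::complex))\<^sup>2)) F"
        by (intro tendsto_intros zlim)
      then show "((\<lambda>z. M * (1 - (cmod z)\<^sup>2)) \<longlongrightarrow> 0) F" by simp
    qed
    then have "((\<lambda>z. 1 - (1 - (cmod (b z))\<^sup>2)) \<longlongrightarrow> 1 - 0) F" by (intro tendsto_intros)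
    then show ?thesis by simp
  qed
  obtain x0 where x0: "x0 \<in> ball 0 1" "b x0 \<noteq> 0"
  proof -
    have "\<exists>x0\<in>ball 0 1. b x0 \<noteq> 0"
    proof (rule ccontr)
      assume "\<not> (\<exists>x0\<in>ball 0 1. b x0 \<noteq> 0)"
      then have b0: "\<forall>x\<in>ball 0 1. b x = 0" by blast
      have "eventually (\<lambda>z. (cmod (b z))\<^sup>2 = 0) F" using evO
        by eventually_elim (use b0 Osub in auto)
      then have "((\<lambda>z. (cmod (b z))\<^sup>2) \<longlongrightarrow> 0) F" by (rule tendsto_eventually)
      from tendsto_unique[OF Fnb this bsq] show False by simp
    qed
    then show ?thesis using that by blast
  qed
  define b1 where "b1 = cnj ((1 - (1 - x0) * g x0) / b x0)"
  have blim: "(b \<longlongrightarrow> b1) F"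
  proof -
    have "((\<lambda>z. (1 - (1 - cnj z * x0) * hb_kernel b z x0) / b x0) \<longlongrightarrow> (1 - (1 - cnj 1 * x0) * g x0) / b x0) F"
      using x0(2) by (intro tendsto_intros zlim ptw[OF x0(1)])
    moreover have "eventually (\<lambda>z. (1 - (1 - cnj z * x0) * hb_kernel b z x0) / b x0 = cnj (b z)) F"
      using evO
    proof eventually_elim
      case (elim z)
      then have z: "z \<in> ball 0 1" using Osub by auto
      have den: "1 - cnj z * x0 \<noteq> 0" using norm_lt1_mult z x0(1) by simp
      have "(1 - cnj z * x0) * hb_kernel b z x0 = 1 - cnj (b z) * b x0" unfolding hb_kernel_def using den by simp
      then show ?case using x0(2) by simp
    qed
    ultimately have "((\<lambda>z. cnj (b z)) \<longlongrightarrow> (1 - (1 - x0) * g x0) / b x0) F"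
      by (simp add: Lim_transform_eventually)
    then have "((\<lambda>z. cnj (cnj (b z))) \<longlongrightarrow> cnj ((1 - (1 - x0) * g x0) / b x0)) F" by (rule tendsto_cnj)
    then show ?thesis unfolding b1_def by simp
  qed
  have b1n: "cmod b1 = 1"
  proof -
    have "((\<lambda>z. (cmod (b z))\<^sup>2) \<longlongrightarrow> (cmod b1)\<^sup>2) F" by (intro tendsto_intros blim)
    from tendsto_unique[OF Fnb this bsq] have "(cmod b1)\<^sup>2 = 1" .
    then have "cmod b1 = 1 \<or> cmod b1 = - 1" by (simp add: power2_eq_1_iff)
    then show ?thesis using norm_ge_zero[of b1] by linarith
  qed
  have b1b1: "b1 * cnj b1 = 1" using complex_norm_square[of b1] b1n by simp
  have gf: "\<forall>x\<in>ball 0 1. g x = (1 - cnj b1 * b x) / (1 - x)"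
  proof
    fix x :: complex assume x: "x \<in> ball 0 1"
    have x1: "1 - x \<noteq> 0" using x by auto
    have "((\<lambda>z. (1 - cnj (b z) * b x) / (1 - cnj z * x)) \<longlongrightarrow> (1 - cnj b1 * b x) / (1 - cnj 1 * x)) F"
      using x1 by (intro tendsto_intros zlim blim) auto
    then have "((\<lambda>z. hb_kernel b z x) \<longlongrightarrow> (1 - cnj b1 * b x) / (1 - x)) F" unfolding hb_kernel_def by simp
    from tendsto_unique[OF Fnb ptw[OF x] this] show "g x = (1 - cnj b1 * b x) / (1 - x)" .
  qed
  have sqD: "sqrt (Dk b z) \<le> 1 + cg" if "Dk b z \<le> M" for z
  proof -
    have "sqrt (Dk b z) \<le> sqrt M" using that by (rule real_sqrt_le_mono)
    also have "sqrt M = 1 + cg" unfolding M_def using cg0 by simp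
    finally show ?thesis .
  qed
  have gC: "cauchy_filter (filtermap g F)" unfolding cauchy_filter_metric_filtermap
  proof (intro allI impI)
    fix e :: real assume e: "e > 0"
    define \<epsilon> where "\<epsilon> = e / (4 * (1 + cg))"
    have \<epsilon>0: "\<epsilon> > 0" unfolding \<epsilon>_def using e cg0 by simp
    have \<epsilon>e: "4 * \<epsilon> * (1 + cg) = e"
    proof -
      have "1 + cg > 0" using cg0 by simp
      then show ?thesis unfolding \<epsilon>_def by (simp add: field_simps)
    qed
    define P where "P = (\<lambda>z. z \<in> \<Omega> \<and> Dk b z \<le> M \<and> (\<exists>c. rkhs_bound (hb_kernel b) (u z) c \<and> c < \<epsilon>))"
    have "eventually P F" using small[OF \<epsilon>0] Dbd unfolding P_def by eventually_elim auto
    moreover have "dist (g z) (g w) < e" if Pz: "P z" and Pw: "P w" for z w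
    proof -
      obtain cz where cz: "rkhs_bound (hb_kernel b) (u z) cz" "cz < \<epsilon>" using Pz unfolding P_def by blast
      obtain cw where cw: "rkhs_bound (hb_kernel b) (u w) cw" "cw < \<epsilon>" using Pw unfolding P_def by blast
      have z: "z \<in> ball 0 1" and w: "w \<in> ball 0 1" using Pz Pw Osub unfolding P_def by auto
      have sz: "sqrt (Dk b z) \<le> 1 + cg" and sw: "sqrt (Dk b w) \<le> 1 + cg" using Pz Pw sqD unfolding P_def by auto
      have cz0: "cz \<ge> 0" and cw0: "cw \<ge> 0" using cz cw unfolding rkhs_bound_iff by auto
      have key: "g x - cnj (g y) = cnj (u x y) - u y x" for x y
        unfolding u_def using hb_cnj[of b x y] by simp
      have a1: "cmod (u z w) \<le> cz * (1 + cg)"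
        using pt_bound[OF cz(1) w] mult_left_mono[OF sw cz0] by linarith
      have a2: "cmod (u w z) \<le> cw * (1 + cg)"
        using pt_bound[OF cw(1) z] mult_left_mono[OF sz cw0] by linarith
      have a3: "cmod (u w w) \<le> cw * (1 + cg)"
        using pt_bound[OF cw(1) w] mult_left_mono[OF sw cw0] by linarith
      have "dist (g z) (g w) = cmod ((g z - cnj (g w)) - (g w - cnj (g w)))" by (simp add: dist_norm)
      also have "\<dots> \<le> cmod (g z - cnj (g w)) + cmod (g w - cnj (g w))" by (rule norm_triangle_ineq4)
      also have "\<dots> = cmod (cnj (u z w) - u w z) + cmod (cnj (u w w) - u w w)" unfolding key ..
      also have "\<dots> \<le> (cmod (u z w) + cmod (u w z)) + (cmod (u w w) + cmod (u w w))"
        using norm_triangle_ineq4[of "cnj (u z w)" "u w z"] norm_triangle_ineq4[of "cnj (u w w)" "u w w"]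
        by simp
      also have "\<dots> \<le> (cz * (1 + cg) + cw * (1 + cg)) + (cw * (1 + cg) + cw * (1 + cg))"
        using a1 a2 a3 by linarith
      also have "\<dots> < 4 * \<epsilon> * (1 + cg)"
      proof -
        have "cz * (1 + cg) < \<epsilon> * (1 + cg)" using cz(2) cg0 by (intro mult_strict_right_mono) auto
        moreover have "cw * (1 + cg) < \<epsilon> * (1 + cg)" using cw(2) cg0 by (intro mult_strict_right_mono) auto
        ultimately show ?thesis by linarith
      qed
      finally show ?thesis using \<epsilon>e by simp
    qed
    ultimately show "\<exists>P. eventually P F \<and> (\<forall>x y. P x \<and> P y \<longrightarrow> dist (g x) (g y) < e)" by blast
  qed
  obtain G where glim: "(g \<longlongrightarrow> G) F"
  proof -
    have "filtermap g F \<noteq> bot" using Fnb by (simp add: filtermap_bot_iff)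
    then obtain c where "filtermap g F \<le> nhds c"
      using cauchy_filter_complete_converges[OF gC complete_UNIV] by auto
    then have "(g \<longlongrightarrow> c) F" by (simp add: filterlim_def)
    then show ?thesis using that by blast
  qed
  define Vd where "Vd = (\<lambda>z. deriv (\<lambda>y. (1 - cnj (b z) * b y) - (1 - cnj z * y) * ((1 - cnj b1 * b y) / (1 - y))) z)"
  have Vdlim: "(Vd \<longlongrightarrow> 0) F"
  proof (rule tendstoI)
    fix e :: real assume e: "e > 0"
    define \<epsilon> where "\<epsilon> = e / (72 * (1 + cg))"
    have cgp: "1 + cg > 0" using cg0 by simp
    have \<epsilon>0: "\<epsilon> > 0" unfolding \<epsilon>_def using e cgp by simp
    have \<epsilon>e: "72 * \<epsilon> * (1 + cg) = e" unfolding \<epsilon>_def using cgp by (simp add: field_simps)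
    show "eventually (\<lambda>z. dist (Vd z) 0 < e) F"
      using small[OF \<epsilon>0] Dbd
    proof eventually_elim
      case (elim z)
      then have z: "z \<in> ball 0 1" using Osub by auto
      from elim obtain c where c: "rkhs_bound (hb_kernel b) (u z) c" "c < \<epsilon>" by blast
      have c0: "c \<ge> 0" using c unfolding rkhs_bound_iff by auto
      have "cmod (Vd z) \<le> 72 * c * sqrt (Dk b z)"
        unfolding Vd_def by (rule deriv_est[OF hol into z _ gf]) (use c(1) in \<open>simp add: u_def\<close>)
      also have "\<dots> \<le> 72 * c * (1 + cg)" using sqD elim c0 by (intro mult_left_mono) auto
      also have "\<dots> < 72 * \<epsilon> * (1 + cg)" using c(2) cgp by simp
      finally show ?case using \<epsilon>e by simp
    qed
  qed
  define den where "den = (\<lambda>z. (1 - cnj z * z) / (1 - z) * cnj b1 - cnj (b z))"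
  define N where "N = (\<lambda>z. Vd z - g z * (cnj z - b1 * cnj (b z)))"
  have Nlim: "(N \<longlongrightarrow> 0) F"
  proof -
    have "((\<lambda>z. Vd z - g z * (cnj z - b1 * cnj (b z))) \<longlongrightarrow> 0 - G * (cnj 1 - b1 * cnj b1)) F"
      by (intro tendsto_intros Vdlim glim zlim blim)
    then show ?thesis unfolding N_def using b1b1 by simp
  qed
  have eqN: "eventually (\<lambda>z. (deriv b z - b1 * g z) * den z = N z) F"
    using evO
  proof eventually_elim
    case (elim z)
    then have z: "z \<in> ball 0 1" using Osub by auto
    have gz: "g z = (1 - cnj b1 * b z) / (1 - z)" using gf z by blast
    have Vz: "Vd z = deriv b z * den z + g z * (cnj z - (1 - cnj z * z) / (1 - z))"
      unfolding Vd_def den_def deriv_formula[OF hol z] gz ..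
    have "b1 * g z * den z = g z * ((1 - cnj z * z) / (1 - z)) * (b1 * cnj b1) - b1 * g z * cnj (b z)"
      unfolding den_def by (simp add: algebra_simps)
    then have "b1 * g z * den z = g z * ((1 - cnj z * z) / (1 - z)) - b1 * g z * cnj (b z)"
      using b1b1 by simp
    then show ?case unfolding N_def Vz by (simp add: algebra_simps)
  qed
  have denlow: "eventually (\<lambda>z. cmod (den z) \<ge> 1 / 2) F"
  proof -
    have ev1: "eventually (\<lambda>z. dist z 1 < 1 / 4) F" using zlim by (rule tendstoD) simp
    have ev2: "eventually (\<lambda>z. dist (b z) b1 < 1 / 4) F" using blim by (rule tendstoD) simp
    show ?thesis using ev1 ev2 evO
    proof eventually_elim
      case (elim z)
      then have z: "z \<in> ball 0 1" using Osub by auto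
      have z1: "1 - z \<noteq> 0" using z by auto
      have nz: "cmod z \<ge> 3 / 4"
      proof -
        have "1 - cmod z \<le> cmod (1 - z)" using norm_triangle_ineq2[of 1 z] by simp
        also have "\<dots> < 1 / 4" using elim by (simp add: dist_norm norm_minus_commute)
        finally show ?thesis by simp
      qed
      have r1: "(1 - cnj z * z) / (1 - z) - 1 = z * (1 - cnj z) / (1 - z)"
        using z1 by (simp add: field_simps)
      have nr1: "cmod ((1 - cnj z * z) / (1 - z) - 1) = cmod z"
      proof -
        have "cmod (1 - cnj z) = cmod (1 - z)" by (metis complex_cnj_diff complex_cnj_one complex_mod_cnj)
        then show ?thesis unfolding r1 using z1 by (simp add: norm_mult norm_divide)
      qed
      have dd: "den z = cnj b1 * ((1 - cnj z * z) / (1 - z) - 1) + cnj (b1 - b z)"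
        unfolding den_def by (simp add: algebra_simps)
      have "cmod (cnj b1 * ((1 - cnj z * z) / (1 - z) - 1)) = cmod z"
        using nr1 b1n by (simp add: norm_mult)
      moreover have "cmod (cnj (b1 - b z)) < 1 / 4"
      proof -
        have "cmod (cnj (b1 - b z)) = dist (b z) b1" by (metis complex_mod_cnj dist_norm norm_minus_commute)
        then show ?thesis using elim by simp
      qed
      moreover have "cmod (cnj b1 * ((1 - cnj z * z) / (1 - z) - 1)) - cmod (cnj (b1 - b z)) \<le> cmod (den z)"
        unfolding dd by (rule norm_diff_ineq)
      ultimately show ?case using nz by linarith
    qed
  qed
  have dlim0: "((\<lambda>z. deriv b z - b1 * g z) \<longlongrightarrow> 0) F"
  proof (rule Lim_null_comparison)
    show "eventually (\<lambda>z. norm (deriv b z - b1 * g z) \<le> 2 * cmod (N z)) F"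
      using eqN denlow
    proof eventually_elim
      case (elim z)
      have "cmod (N z) = cmod (deriv b z - b1 * g z) * cmod (den z)" using elim(1) by (metis norm_mult)
      moreover have "cmod (deriv b z - b1 * g z) * (1 / 2) \<le> cmod (deriv b z - b1 * g z) * cmod (den z)"
        using elim(2) by (intro mult_left_mono) auto
      ultimately show ?case by simp
    qed
    have "((\<lambda>z. 2 * cmod (N z)) \<longlongrightarrow> 2 * cmod (0::complex)) F" by (intro tendsto_intros Nlim)
    then show "((\<lambda>z. 2 * cmod (N z)) \<longlongrightarrow> 0) F" by simp
  qed
  have "((\<lambda>z. (deriv b z - b1 * g z) + b1 * g z) \<longlongrightarrow> 0 + b1 * G) F"
    by (intro tendsto_intros dlim0 glim)
  then have dlim: "(deriv b \<longlongrightarrow> b1 * G) F" by simp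
  show ?thesis using blim dlim b1n unfolding F_def by blast
qed


end
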